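(* (a) For every bracket pattern $w$, the set $\mathbb N_0\setminus A(w)$ is a submonoid of $(\mathbb N_0,+)$. (b) For every submonoid $M$ of $(\mathbb N_0,+)$ such that $\mathbb N_0\setminus M$ is finite, $A(\mathbb N_0\setminus M)=\mathbb N_0\setminus M$. In particular, a bracket pattern $w$ satisfies $w=A(w)$ if and only if $w=\mathbb N_0\setminus M$ for some submonoid $M$ of $(\mathbb N_0,+)$.
   Context: $\mathbb N=\{1,2,\dots\}$, $\mathbb N_0=\mathbb N\cup\{0\}$. A bracket pattern is a non-empty finite subset $w\subseteq\mathbb N$. For any finite subset $w\subseteq\mathbb N$ (in particular for bracket patterns), the completion is $A(w):=\{j-i\mid j\in w,\ i\in\mathbb N_0,\ i\notin w,\ i<j\}$ (so $A(\emptyset)=\emptyset$). A submonoid of $(\mathbb N_0,+)$ is a subset containing $0$ and closed under addition. *)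

theory Defs
  imports Main
begin

definition bracket_pattern :: "nat set \<Rightarrow> bool" where
  "bracket_pattern w \<longleftrightarrow> w \<noteq> {} \<and> finite w \<and> 0 \<notin> w"

definition completion :: "nat set \<Rightarrow> nat set" where
  "completion w = {j - i | j i. j \<in> w \<and> i \<notin> w \<and> i < j}"

definition submonoid_nat :: "nat set \<Rightarrow> bool" where
  "submonoid_nat M \<longleftrightarrow> 0 \<in> M \<and> (\<forall>a\<in>M. \<forall>b\<in>M. a + b \<in> M)"

end

theory Submission
  imports Defs
begin

lemma partA:
  assumes "bracket_pattern w"
  shows "submonoid_nat (UNIV - completion w)"
  unfolding submonoid_nat_def
proof (intro conjI ballI)
  show "0 \<in> UNIV - completion w" by (auto simp: completion_def)
next
  fix a b assume a: "a \<in> UNIV - completion w" and b: "b \<in> UNIV - completion w"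
  show "a + b \<in> UNIV - completion w"
  proof
    show "a + b \<notin> completion w"
    proof
      assume "a + b \<in> completion w"
      then obtain j i where ji: "a + b = j - i" "j \<in> w" "i \<notin> w" "i < j"
        unfolding completion_def by blast
      show False
      proof (cases "i + a \<in> w")
        case True
        then have "a \<noteq> 0" using ji(3) by (cases "a = 0") simp_all
        then have "a = (i + a) - i \<and> i + a \<in> w \<and> i \<notin> w \<and> i < i + a"
          using True ji by simp
        then have "a \<in> completion w" unfolding completion_def by blast
        with a show False by simp
      next
        case False
        have "b \<in> completion w"
        proof (cases "b = 0")
          case True
          then have "a = j - i" using ji by simp
          then have "i + a = j" using ji by simp
          with False ji have False by simp
          then show ?thesis by simp
        next
          case nz: False
          have "b = j - (i + a) \<and> j \<in> w \<and> i + a \<notin> w \<and> i + a < j"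
            using ji False nz by auto
          then show ?thesis unfolding completion_def by blast
        qed
        with b show False by simp
      qed
    qed
  qed simp
qed

lemma partB:
  assumes "submonoid_nat M"
  shows "completion (UNIV - M) = UNIV - M"
proof
  show "completion (UNIV - M) \<subseteq> UNIV - M"
  proof
    fix d assume "d \<in> completion (UNIV - M)"
    then obtain j i where ji: "d = j - i" "j \<notin> M" "i \<in> M" "i < j"
      unfolding completion_def by blast
    show "d \<in> UNIV - M"
    proof
      show "d \<notin> M"
      proof
        assume "d \<in> M"
        then have "i + d \<in> M" using assms ji unfolding submonoid_nat_def by blast
        moreover have "i + d = j" using ji by simp
        ultimately show False using ji by simp
      qed
    qed simp
  qed
next
  show "UNIV - M \<subseteq> completion (UNIV - M)"
  proof
    fix d assume d: "d \<in> UNIV - M"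
    have "0 \<in> M" using assms unfolding submonoid_nat_def by blast
    then have "d \<noteq> 0" using d by (cases "d = 0") simp_all
    then have "d = d - 0 \<and> d \<in> UNIV - M \<and> (0::nat) \<notin> UNIV - M \<and> 0 < d"
      using d \<open>0 \<in> M\<close> by simp
    then show "d \<in> completion (UNIV - M)" unfolding completion_def
      using d \<open>0 \<in> M\<close> \<open>d \<noteq> 0\<close> by blast
  qed
qed

theorem lemma7p13:
  shows "(\<forall>w. bracket_pattern w \<longrightarrow> submonoid_nat (UNIV - completion w))
    \<and> (\<forall>M. submonoid_nat M \<and> finite (UNIV - M) \<longrightarrow> completion (UNIV - M) = UNIV - M)
    \<and> (\<forall>w. bracket_pattern w \<longrightarrow>
          (w = completion w \<longleftrightarrow> (\<exists>M. submonoid_nat M \<and> w = UNIV - M)))"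
proof (intro conjI allI impI)
  fix w assume "bracket_pattern w"
  then show "submonoid_nat (UNIV - completion w)" by (rule partA)
next
  fix M assume "submonoid_nat M \<and> finite (UNIV - M)"
  then show "completion (UNIV - M) = UNIV - M" using partB by blast
next
  fix w assume bw: "bracket_pattern w"
  show "w = completion w \<longleftrightarrow> (\<exists>M. submonoid_nat M \<and> w = UNIV - M)"
  proof
    assume "w = completion w"
    then have "submonoid_nat (UNIV - w)" using partA[OF bw] by simp
    then show "\<exists>M. submonoid_nat M \<and> w = UNIV - M"
      by (intro exI[of _ "UNIV - w"]) auto
  next
    assume "\<exists>M. submonoid_nat M \<and> w = UNIV - M"
    then show "w = completion w" using partB by auto
  qed
qed

end
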